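(* Let $M$ be a self-similar right $R$-module. Then $M$ is quasi-pseudo principally injective if and only if $M$ is semisimple.
   Context: All rings are associative with identity and all modules are unitary right $R$-modules. A submodule $N$ of $M$ is called $M$-cyclic if $N\cong M/L$ for some submodule $L$ of $M$ (equivalently, $N$ is the image of an endomorphism of $M$). $M$ is quasi-pseudo principally injective if for every $M$-cyclic submodule $A$ of $M$, every $R$-monomorphism $A\to M$ extends to an $R$-endomorphism of $M$. A module $M$ is self-similar if every nonzero submodule of $M$ is isomorphic to $M$. A module is semisimple if every submodule is a direct summand. *)

theory Defs
  imports "HOL-Algebra.Ring"
begin

text \<open>Right R-modules: the underlying abelian group is the additive structure of the
record M (its multiplicative part is ignored); scalar multiplication acts on the right,
written s x r for x r.\<close>

definition right_module ::
  "('a, 'c) ring_scheme \<Rightarrow> ('b, 'd) ring_scheme \<Rightarrow> ('b \<Rightarrow> 'a \<Rightarrow> 'b) \<Rightarrow> bool" where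
  "right_module R M s \<longleftrightarrow> ring R \<and> abelian_group M \<and>
     (\<forall>x\<in>carrier M. \<forall>r\<in>carrier R. s x r \<in> carrier M) \<and>
     (\<forall>x\<in>carrier M. \<forall>y\<in>carrier M. \<forall>r\<in>carrier R. s (x \<oplus>\<^bsub>M\<^esub> y) r = s x r \<oplus>\<^bsub>M\<^esub> s y r) \<and>
     (\<forall>x\<in>carrier M. \<forall>r\<in>carrier R. \<forall>t\<in>carrier R. s x (r \<oplus>\<^bsub>R\<^esub> t) = s x r \<oplus>\<^bsub>M\<^esub> s x t) \<and>
     (\<forall>x\<in>carrier M. \<forall>r\<in>carrier R. \<forall>t\<in>carrier R. s x (r \<otimes>\<^bsub>R\<^esub> t) = s (s x r) t) \<and>
     (\<forall>x\<in>carrier M. s x \<one>\<^bsub>R\<^esub> = x)"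

definition submod ::
  "('a, 'c) ring_scheme \<Rightarrow> ('b, 'd) ring_scheme \<Rightarrow> ('b \<Rightarrow> 'a \<Rightarrow> 'b) \<Rightarrow> 'b set \<Rightarrow> bool" where
  "submod R M s N \<longleftrightarrow> N \<subseteq> carrier M \<and> \<zero>\<^bsub>M\<^esub> \<in> N \<and>
     (\<forall>x\<in>N. \<forall>y\<in>N. x \<oplus>\<^bsub>M\<^esub> y \<in> N) \<and> (\<forall>x\<in>N. a_inv M x \<in> N) \<and>
     (\<forall>x\<in>N. \<forall>r\<in>carrier R. s x r \<in> N)"

definition mod_hom ::
  "('a, 'c) ring_scheme \<Rightarrow> ('b, 'd) ring_scheme \<Rightarrow> ('b \<Rightarrow> 'a \<Rightarrow> 'b) \<Rightarrow> 'b set \<Rightarrow> 'b set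
   \<Rightarrow> ('b \<Rightarrow> 'b) \<Rightarrow> bool" where
  "mod_hom R M s A B f \<longleftrightarrow> f \<in> A \<rightarrow> B \<and>
     (\<forall>x\<in>A. \<forall>y\<in>A. f (x \<oplus>\<^bsub>M\<^esub> y) = f x \<oplus>\<^bsub>M\<^esub> f y) \<and>
     (\<forall>x\<in>A. \<forall>r\<in>carrier R. f (s x r) = s (f x) r)"

definition mod_endo ::
  "('a, 'c) ring_scheme \<Rightarrow> ('b, 'd) ring_scheme \<Rightarrow> ('b \<Rightarrow> 'a \<Rightarrow> 'b) \<Rightarrow> ('b \<Rightarrow> 'b) \<Rightarrow> bool" where
  "mod_endo R M s g \<longleftrightarrow> mod_hom R M s (carrier M) (carrier M) g"

text \<open>N is M-cyclic: N is the image of an endomorphism of M (equivalently N \<cong> M/L).\<close>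
definition M_cyclic ::
  "('a, 'c) ring_scheme \<Rightarrow> ('b, 'd) ring_scheme \<Rightarrow> ('b \<Rightarrow> 'a \<Rightarrow> 'b) \<Rightarrow> 'b set \<Rightarrow> bool" where
  "M_cyclic R M s N \<longleftrightarrow> submod R M s N \<and> (\<exists>g. mod_endo R M s g \<and> g ` carrier M = N)"

definition quasi_pseudo_principally_injective ::
  "('a, 'c) ring_scheme \<Rightarrow> ('b, 'd) ring_scheme \<Rightarrow> ('b \<Rightarrow> 'a \<Rightarrow> 'b) \<Rightarrow> bool" where
  "quasi_pseudo_principally_injective R M s \<longleftrightarrow>
     (\<forall>A f. M_cyclic R M s A \<and> mod_hom R M s A (carrier M) f \<and> inj_on f A \<longrightarrow>
        (\<exists>g. mod_endo R M s g \<and> (\<forall>x\<in>A. g x = f x)))"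

definition self_similar ::
  "('a, 'c) ring_scheme \<Rightarrow> ('b, 'd) ring_scheme \<Rightarrow> ('b \<Rightarrow> 'a \<Rightarrow> 'b) \<Rightarrow> bool" where
  "self_similar R M s \<longleftrightarrow>
     (\<forall>N. submod R M s N \<and> N \<noteq> {\<zero>\<^bsub>M\<^esub>} \<longrightarrow>
        (\<exists>f. mod_hom R M s (carrier M) N f \<and> bij_betw f (carrier M) N))"

definition semisimple ::
  "('a, 'c) ring_scheme \<Rightarrow> ('b, 'd) ring_scheme \<Rightarrow> ('b \<Rightarrow> 'a \<Rightarrow> 'b) \<Rightarrow> bool" where
  "semisimple R M s \<longleftrightarrow>
     (\<forall>N. submod R M s N \<longrightarrow>
        (\<exists>K. submod R M s K \<and> N \<inter> K = {\<zero>\<^bsub>M\<^esub>} \<and>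
             (\<forall>z\<in>carrier M. \<exists>x\<in>N. \<exists>y\<in>K. z = x \<oplus>\<^bsub>M\<^esub> y)))"

end

theory Submission imports Defs begin
lemma ag1: assumes "abelian_group M" "x \<in> carrier M" "y \<in> carrier M" "x' \<in> carrier M" "y' \<in> carrier M"
 "x \<oplus>\<^bsub>M\<^esub> y = x' \<oplus>\<^bsub>M\<^esub> y'" shows "x \<ominus>\<^bsub>M\<^esub> x' = y' \<ominus>\<^bsub>M\<^esub> y"
proof -
  interpret abelian_group M by fact
  have k: "y \<oplus>\<^bsub>M\<^esub> (\<ominus>\<^bsub>M\<^esub> x' \<oplus>\<^bsub>M\<^esub> \<ominus>\<^bsub>M\<^esub> y) = \<ominus>\<^bsub>M\<^esub> x'"
    using assms(2-5) by (metis add.m_lcomm r_neg r_zero add.inv_closed)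
  have k2: "y' \<oplus>\<^bsub>M\<^esub> (\<ominus>\<^bsub>M\<^esub> x' \<oplus>\<^bsub>M\<^esub> \<ominus>\<^bsub>M\<^esub> y) = \<ominus>\<^bsub>M\<^esub> x' \<oplus>\<^bsub>M\<^esub> (y' \<oplus>\<^bsub>M\<^esub> \<ominus>\<^bsub>M\<^esub> y)"
    using assms(2-5) by (metis add.m_lcomm add.inv_closed)
  have "x \<ominus>\<^bsub>M\<^esub> x' = (x \<oplus>\<^bsub>M\<^esub> y) \<ominus>\<^bsub>M\<^esub> (x' \<oplus>\<^bsub>M\<^esub> y)" using assms(2-5) k by (simp add: a_minus_def minus_add a_ac)
  also have "\<dots> = (x' \<oplus>\<^bsub>M\<^esub> y') \<ominus>\<^bsub>M\<^esub> (x' \<oplus>\<^bsub>M\<^esub> y)" using assms(6) by simp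
  also have "\<dots> = y' \<ominus>\<^bsub>M\<^esub> y" using assms(2-5) k2 by (simp add: a_minus_def minus_add a_assoc r_neg2)
  finally show ?thesis .
qed
lemma ag2: assumes "abelian_group M" "x \<in> carrier M" "y \<in> carrier M" 
 "x \<ominus>\<^bsub>M\<^esub> y = \<zero>\<^bsub>M\<^esub>" shows "x = y"
proof -
  interpret abelian_group M by fact
  show ?thesis using assms(2-4) minus_equality by (metis a_minus_def add.inv_closed add.inv_inv)
qed
lemma ag3: assumes "abelian_group M" "x \<in> carrier M" 
 "x \<oplus>\<^bsub>M\<^esub> x = x" shows "x = \<zero>\<^bsub>M\<^esub>"
proof -
  interpret abelian_group M by fact
  show ?thesis using assms by (metis add.r_cancel_one)
qed

lemma hom_zero: assumes "abelian_group M" "mod_hom R M s (carrier M) B f" "B \<subseteq> carrier M"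
  shows "f \<zero>\<^bsub>M\<^esub> = \<zero>\<^bsub>M\<^esub>"
proof -
  interpret abelian_group M by fact
  have c: "f \<zero>\<^bsub>M\<^esub> \<in> carrier M" using assms(2,3) unfolding mod_hom_def by auto
  have "f \<zero>\<^bsub>M\<^esub> \<oplus>\<^bsub>M\<^esub> f \<zero>\<^bsub>M\<^esub> = f \<zero>\<^bsub>M\<^esub>"
    using assms(2) unfolding mod_hom_def by (metis zero_closed l_zero)
  thus ?thesis using ag3[OF assms(1) c] by simp
qed

lemma hom_minus: assumes "abelian_group M" "mod_hom R M s (carrier M) B f" "B \<subseteq> carrier M"
   "x \<in> carrier M" "y \<in> carrier M"
  shows "f (x \<ominus>\<^bsub>M\<^esub> y) = f x \<ominus>\<^bsub>M\<^esub> f y"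
proof -
  interpret abelian_group M by fact
  have fc: "\<And>z. z \<in> carrier M \<Longrightarrow> f z \<in> carrier M" using assms(2,3) unfolding mod_hom_def by auto
  have add: "\<And>a b. a \<in> carrier M \<Longrightarrow> b \<in> carrier M \<Longrightarrow> f (a \<oplus>\<^bsub>M\<^esub> b) = f a \<oplus>\<^bsub>M\<^esub> f b"
    using assms(2) unfolding mod_hom_def by auto
  have "f y \<oplus>\<^bsub>M\<^esub> f (\<ominus>\<^bsub>M\<^esub> y) = \<zero>\<^bsub>M\<^esub>"
    using add[of y "\<ominus>\<^bsub>M\<^esub> y"] assms(4,5) hom_zero[OF assms(1-3)] by (simp add: r_neg)
  hence "f (\<ominus>\<^bsub>M\<^esub> y) = \<ominus>\<^bsub>M\<^esub> f y" using fc assms(5)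
    by (metis add.inv_closed minus_equality a_comm)
  thus ?thesis using add[of x "\<ominus>\<^bsub>M\<^esub> y"] assms(4,5) by (simp add: a_minus_def)
qed

lemma sm_sub: "submod R M s N \<Longrightarrow> N \<subseteq> carrier M" by (simp add: submod_def)
lemma sm_zero: "submod R M s N \<Longrightarrow> \<zero>\<^bsub>M\<^esub> \<in> N" by (simp add: submod_def)
lemma sm_add: "submod R M s N \<Longrightarrow> x \<in> N \<Longrightarrow> y \<in> N \<Longrightarrow> x \<oplus>\<^bsub>M\<^esub> y \<in> N" by (simp add: submod_def)
lemma sm_inv: "submod R M s N \<Longrightarrow> x \<in> N \<Longrightarrow> a_inv M x \<in> N" by (simp add: submod_def)
lemma sm_smul: "submod R M s N \<Longrightarrow> x \<in> N \<Longrightarrow> r \<in> carrier R \<Longrightarrow> s x r \<in> N" by (simp add: submod_def)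

lemma rm_ag: "right_module R M s \<Longrightarrow> abelian_group M"
  unfolding right_module_def by (elim conjE) assumption
lemma rm_smc: "right_module R M s \<Longrightarrow> \<forall>x\<in>carrier M. \<forall>r\<in>carrier R. s x r \<in> carrier M"
  unfolding right_module_def by (elim conjE) assumption
lemma rm_dist: "right_module R M s \<Longrightarrow> \<forall>x\<in>carrier M. \<forall>y\<in>carrier M. \<forall>r\<in>carrier R. s (x \<oplus>\<^bsub>M\<^esub> y) r = s x r \<oplus>\<^bsub>M\<^esub> s y r"
  unfolding right_module_def by (elim conjE) assumption

lemma s_zero: assumes "right_module R M s" "r \<in> carrier R" shows "s \<zero>\<^bsub>M\<^esub> r = \<zero>\<^bsub>M\<^esub>"
proof -
  have ag: "abelian_group M" using rm_ag[OF assms(1)] .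
  interpret abelian_group M by fact
  have "s \<zero>\<^bsub>M\<^esub> r \<oplus>\<^bsub>M\<^esub> s \<zero>\<^bsub>M\<^esub> r = s \<zero>\<^bsub>M\<^esub> r"
    using rm_dist[OF assms(1)] assms(2) by (metis zero_closed l_zero)
  moreover have "s \<zero>\<^bsub>M\<^esub> r \<in> carrier M" using rm_smc[OF assms(1)] assms(2) by blast
  ultimately show ?thesis using ag3[OF ag] by blast
qed

lemma ss_qppi: assumes rm: "right_module R M s" and ss: "semisimple R M s"
  shows "quasi_pseudo_principally_injective R M s"
  unfolding quasi_pseudo_principally_injective_def
proof (intro allI impI, elim conjE)
  fix A f assume cyc: "M_cyclic R M s A" and fh: "mod_hom R M s A (carrier M) f" and "inj_on f A"
  have ag: "abelian_group M" using rm_ag[OF rm] .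
  interpret abelian_group M by fact
  have smc: "\<forall>x\<in>carrier M. \<forall>r\<in>carrier R. s x r \<in> carrier M" using rm_smc[OF rm] .
  have sdist: "\<forall>x\<in>carrier M. \<forall>y\<in>carrier M. \<forall>r\<in>carrier R. s (x \<oplus>\<^bsub>M\<^esub> y) r = s x r \<oplus>\<^bsub>M\<^esub> s y r"
    using rm_dist[OF rm] .
  have sA: "submod R M s A" using cyc unfolding M_cyclic_def by auto
  obtain K where sK: "submod R M s K" and AK: "A \<inter> K = {\<zero>\<^bsub>M\<^esub>}"
    and dec: "\<forall>z\<in>carrier M. \<exists>x\<in>A. \<exists>y\<in>K. z = x \<oplus>\<^bsub>M\<^esub> y"
    using mp[OF spec[OF ss[unfolded semisimple_def], of A] sA] by (elim exE conjE)
  have Ac: "A \<subseteq> carrier M" and Kc: "K \<subseteq> carrier M" using sm_sub[OF sA] sm_sub[OF sK] .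
  have uniq: "x = x'" if "x \<in> A" "y \<in> K" "x' \<in> A" "y' \<in> K" "x \<oplus>\<^bsub>M\<^esub> y = x' \<oplus>\<^bsub>M\<^esub> y'" for x y x' y'
  proof -
    have xc: "x \<in> carrier M" "y \<in> carrier M" "x' \<in> carrier M" "y' \<in> carrier M"
      using that(1-4) Ac Kc by (auto dest: subsetD)
    have e: "x \<ominus>\<^bsub>M\<^esub> x' = y' \<ominus>\<^bsub>M\<^esub> y" by (rule ag1[OF ag xc(1,2,3,4) that(5)])
    have "x \<ominus>\<^bsub>M\<^esub> x' \<in> A" unfolding a_minus_def using that(1,3) by (intro sm_add[OF sA] sm_inv[OF sA])
    moreover have "y' \<ominus>\<^bsub>M\<^esub> y \<in> K" unfolding a_minus_def using that(2,4) by (intro sm_add[OF sK] sm_inv[OF sK])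
    ultimately have "x \<ominus>\<^bsub>M\<^esub> x' \<in> A \<inter> K" using e by simp
    hence "x \<ominus>\<^bsub>M\<^esub> x' = \<zero>\<^bsub>M\<^esub>" using AK by simp
    thus ?thesis by (rule ag2[OF ag xc(1,3)])
  qed
  define p where "p z = (SOME x. x \<in> A \<and> (\<exists>y\<in>K. z = x \<oplus>\<^bsub>M\<^esub> y))" for z
  have p: "p z \<in> A \<and> (\<exists>y\<in>K. z = p z \<oplus>\<^bsub>M\<^esub> y)" if "z \<in> carrier M" for z
  proof -
    from bspec[OF dec that] obtain x where x: "x \<in> A" and "\<exists>y\<in>K. z = x \<oplus>\<^bsub>M\<^esub> y" ..
    hence ex: "\<exists>x. x \<in> A \<and> (\<exists>y\<in>K. z = x \<oplus>\<^bsub>M\<^esub> y)" using x by (intro exI[of _ x] conjI)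
    have "(SOME x. x \<in> A \<and> (\<exists>y\<in>K. z = x \<oplus>\<^bsub>M\<^esub> y)) \<in> A \<and> (\<exists>y\<in>K. z = (SOME x. x \<in> A \<and> (\<exists>y\<in>K. z = x \<oplus>\<^bsub>M\<^esub> y)) \<oplus>\<^bsub>M\<^esub> y)"
      using someI_ex[OF ex] .
    thus ?thesis unfolding p_def .
  qed
  have peq: "p z = x" if h: "z \<in> carrier M" "x \<in> A" "y \<in> K" "z = x \<oplus>\<^bsub>M\<^esub> y" for z x y
  proof -
    have pA: "p z \<in> A" and "\<exists>y\<in>K. z = p z \<oplus>\<^bsub>M\<^esub> y" using p[OF h(1)] by (rule conjunct1, rule conjunct2)
    from this(2) obtain y' where y': "y' \<in> K" "z = p z \<oplus>\<^bsub>M\<^esub> y'" ..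
    have "p z \<oplus>\<^bsub>M\<^esub> y' = x \<oplus>\<^bsub>M\<^esub> y" using y'(2) h(4) by simp
    thus ?thesis by (rule uniq[OF pA y'(1) h(2) h(3)])
  qed
  define g where "g z = f (p z)" for z
  have fA: "f \<in> A \<rightarrow> carrier M" and fadd: "\<forall>x\<in>A. \<forall>y\<in>A. f (x \<oplus>\<^bsub>M\<^esub> y) = f x \<oplus>\<^bsub>M\<^esub> f y"
    and fs: "\<forall>x\<in>A. \<forall>r\<in>carrier R. f (s x r) = s (f x) r" using fh unfolding mod_hom_def by auto
  have "mod_endo R M s g"
    unfolding mod_endo_def mod_hom_def
  proof (intro conjI ballI)
    show "g \<in> carrier M \<rightarrow> carrier M"
    proof
      fix z assume "z \<in> carrier M"
      hence "p z \<in> A" using p by simp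
      thus "g z \<in> carrier M" unfolding g_def by (rule funcset_mem[OF fA])
    qed
  next
    fix x y assume x: "x \<in> carrier M" and y: "y \<in> carrier M"
    obtain a b where a: "a \<in> A" "b \<in> K" "x = a \<oplus>\<^bsub>M\<^esub> b" "p x = a" using p[OF x] by blast
    obtain c d where c: "c \<in> A" "d \<in> K" "y = c \<oplus>\<^bsub>M\<^esub> d" "p y = c" using p[OF y] by blast
    have ac: "a \<in> carrier M" "b \<in> carrier M" "c \<in> carrier M" "d \<in> carrier M"
      using a(1,2) c(1,2) Ac Kc by (auto dest: subsetD)
    have eq: "x \<oplus>\<^bsub>M\<^esub> y = (a \<oplus>\<^bsub>M\<^esub> c) \<oplus>\<^bsub>M\<^esub> (b \<oplus>\<^bsub>M\<^esub> d)"
      using ac a(3) c(3) by (simp add: a_ac)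
    have i1: "a \<oplus>\<^bsub>M\<^esub> c \<in> A" and i2: "b \<oplus>\<^bsub>M\<^esub> d \<in> K" using sm_add[OF sA a(1) c(1)] sm_add[OF sK a(2) c(2)] .
    have xy: "x \<oplus>\<^bsub>M\<^esub> y \<in> carrier M" using x y by simp
    have "p (x \<oplus>\<^bsub>M\<^esub> y) = a \<oplus>\<^bsub>M\<^esub> c" by (rule peq[OF xy i1 i2 eq])
    thus "g (x \<oplus>\<^bsub>M\<^esub> y) = g x \<oplus>\<^bsub>M\<^esub> g y" unfolding g_def using a c fadd by simp
  next
    fix x r assume x: "x \<in> carrier M" and r: "r \<in> carrier R"
    obtain a b where a: "a \<in> A" "b \<in> K" "x = a \<oplus>\<^bsub>M\<^esub> b" "p x = a" using p[OF x] by blast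
    have ac: "a \<in> carrier M" "b \<in> carrier M" using a(1,2) Ac Kc by (auto dest: subsetD)
    have eq: "s x r = s a r \<oplus>\<^bsub>M\<^esub> s b r" using sdist ac r a(3) by simp
    have i1: "s a r \<in> A" and i2: "s b r \<in> K" using sm_smul[OF sA a(1) r] sm_smul[OF sK a(2) r] .
    have xr: "s x r \<in> carrier M" using smc x r by simp
    have "p (s x r) = s a r" by (rule peq[OF xr i1 i2 eq])
    thus "g (s x r) = s (g x) r" unfolding g_def using a fs r by simp
  qed
  moreover have "\<forall>x\<in>A. g x = f x"
  proof
    fix x assume x: "x \<in> A"
    have "x = x \<oplus>\<^bsub>M\<^esub> \<zero>\<^bsub>M\<^esub>" using x Ac by auto
    moreover have "\<zero>\<^bsub>M\<^esub> \<in> K" using sm_zero[OF sK] .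
    ultimately have "p x = x" using peq[of x x "\<zero>\<^bsub>M\<^esub>"] x Ac by blast
    thus "g x = f x" unfolding g_def by simp
  qed
  ultimately show "\<exists>g. mod_endo R M s g \<and> (\<forall>x\<in>A. g x = f x)" by blast
qed

lemma qppi_ss: assumes rm: "right_module R M s" and sim: "self_similar R M s"
   and q: "quasi_pseudo_principally_injective R M s"
  shows "semisimple R M s"
  unfolding semisimple_def
proof (intro allI impI)
  fix N assume sN: "submod R M s N"
  have ag: "abelian_group M" using rm_ag[OF rm] .
  interpret abelian_group M by fact
  have Nc: "N \<subseteq> carrier M" using sm_sub[OF sN] .
  show "\<exists>K. submod R M s K \<and> N \<inter> K = {\<zero>\<^bsub>M\<^esub>} \<and> (\<forall>z\<in>carrier M. \<exists>x\<in>N. \<exists>y\<in>K. z = x \<oplus>\<^bsub>M\<^esub> y)"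
  proof (cases "N = {\<zero>\<^bsub>M\<^esub>}")
    case True
    have smc: "\<forall>x\<in>carrier M. \<forall>r\<in>carrier R. s x r \<in> carrier M" using rm_smc[OF rm] .
    have "submod R M s (carrier M)" unfolding submod_def using smc by simp
    moreover have "\<forall>z\<in>carrier M. \<exists>x\<in>N. \<exists>y\<in>carrier M. z = x \<oplus>\<^bsub>M\<^esub> y" using True by auto
    ultimately show ?thesis using True by auto
  next
    case False
    then obtain f where fh: "mod_hom R M s (carrier M) N f" and fb: "bij_betw f (carrier M) N"
      using sim sN unfolding self_similar_def by blast
    have fadd: "\<And>x y. x \<in> carrier M \<Longrightarrow> y \<in> carrier M \<Longrightarrow> f (x \<oplus>\<^bsub>M\<^esub> y) = f x \<oplus>\<^bsub>M\<^esub> f y"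
      and fs: "\<And>x r. x \<in> carrier M \<Longrightarrow> r \<in> carrier R \<Longrightarrow> f (s x r) = s (f x) r"
      using fh unfolding mod_hom_def by auto
    have fN: "\<And>x. x \<in> carrier M \<Longrightarrow> f x \<in> N" using fb bij_betwE by blast
    have finj: "inj_on f (carrier M)" using fb unfolding bij_betw_def by (elim conjE)
    have fim: "f ` carrier M = N" using fb unfolding bij_betw_def by (elim conjE)
    have "mod_endo R M s f" unfolding mod_endo_def mod_hom_def
      using fh fN Nc unfolding mod_hom_def by (auto intro!: funcsetI)
    hence cyc: "M_cyclic R M s N" unfolding M_cyclic_def using sN fim by blast
    define h where "h = inv_into (carrier M) f"
    have hc: "\<And>x. x \<in> N \<Longrightarrow> h x \<in> carrier M" and fh': "\<And>x. x \<in> N \<Longrightarrow> f (h x) = x"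
      unfolding h_def using fim by (auto simp: inv_into_into f_inv_into_f)
    have hf: "\<And>z. z \<in> carrier M \<Longrightarrow> h (f z) = z" unfolding h_def using finj by (simp add: inv_into_f_f)
    have hinj: "inj_on h N" unfolding h_def using fim inj_on_inv_into by blast
    have hhom: "mod_hom R M s N (carrier M) h" unfolding mod_hom_def
    proof (intro conjI ballI)
      show "h \<in> N \<rightarrow> carrier M" using hc by auto
    next
      fix x y assume x: "x \<in> N" and y: "y \<in> N"
      have "f (h x \<oplus>\<^bsub>M\<^esub> h y) = x \<oplus>\<^bsub>M\<^esub> y" using fadd hc fh' x y by simp
      moreover have "h x \<oplus>\<^bsub>M\<^esub> h y \<in> carrier M" using hc x y by simp
      ultimately show "h (x \<oplus>\<^bsub>M\<^esub> y) = h x \<oplus>\<^bsub>M\<^esub> h y"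
        using hf by (metis (no_types))
    next
      fix x r assume x: "x \<in> N" and r: "r \<in> carrier R"
      have "f (s (h x) r) = s x r" using fs hc fh' x r by simp
      moreover have "s (h x) r \<in> carrier M" using rm_smc[OF rm] hc x r by blast
      ultimately show "h (s x r) = s (h x) r"
        using hf by (metis (no_types))
    qed
    obtain g where ge: "mod_endo R M s g" and gh: "\<forall>x\<in>N. g x = h x"
      using q cyc hhom hinj unfolding quasi_pseudo_principally_injective_def by blast
    have gadd: "\<And>x y. x \<in> carrier M \<Longrightarrow> y \<in> carrier M \<Longrightarrow> g (x \<oplus>\<^bsub>M\<^esub> y) = g x \<oplus>\<^bsub>M\<^esub> g y"
      and gs: "\<And>x r. x \<in> carrier M \<Longrightarrow> r \<in> carrier R \<Longrightarrow> g (s x r) = s (g x) r"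
      and gc: "\<And>x. x \<in> carrier M \<Longrightarrow> g x \<in> carrier M"
      using ge unfolding mod_endo_def mod_hom_def by auto
    define e where "e z = f (g z)" for z
    have fc: "\<And>x. x \<in> carrier M \<Longrightarrow> f x \<in> carrier M" using fN Nc by blast
    have eh: "mod_hom R M s (carrier M) (carrier M) e" unfolding mod_hom_def
    proof (intro conjI ballI funcsetI)
      fix x assume "x \<in> carrier M" thus "e x \<in> carrier M" unfolding e_def using gc fc by blast
    next
      fix x y assume "x \<in> carrier M" "y \<in> carrier M"
      thus "e (x \<oplus>\<^bsub>M\<^esub> y) = e x \<oplus>\<^bsub>M\<^esub> e y" unfolding e_def using gadd gc fadd by simp
    next
      fix x r assume "x \<in> carrier M" "r \<in> carrier R"
      thus "e (s x r) = s (e x) r" unfolding e_def using gs gc fs by simp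
    qed
    have eN: "\<And>z. z \<in> carrier M \<Longrightarrow> e z \<in> N" unfolding e_def using gc fN by auto
    have eid: "\<And>x. x \<in> N \<Longrightarrow> e x = x" unfolding e_def using gh fh' by auto
    have e0: "e \<zero>\<^bsub>M\<^esub> = \<zero>\<^bsub>M\<^esub>" using hom_zero[OF ag eh] by simp
    define K where "K = {z \<in> carrier M. e z = \<zero>\<^bsub>M\<^esub>}"
    have "submod R M s K" unfolding submod_def K_def
    proof (intro conjI ballI)
      show "\<zero>\<^bsub>M\<^esub> \<in> {z \<in> carrier M. e z = \<zero>\<^bsub>M\<^esub>}" using e0 by auto
    next
      fix x y assume "x \<in> {z \<in> carrier M. e z = \<zero>\<^bsub>M\<^esub>}" "y \<in> {z \<in> carrier M. e z = \<zero>\<^bsub>M\<^esub>}"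
      moreover have "\<forall>x\<in>carrier M. \<forall>y\<in>carrier M. e (x \<oplus>\<^bsub>M\<^esub> y) = e x \<oplus>\<^bsub>M\<^esub> e y" using eh unfolding mod_hom_def by blast
      ultimately show "x \<oplus>\<^bsub>M\<^esub> y \<in> {z \<in> carrier M. e z = \<zero>\<^bsub>M\<^esub>}" by simp
    next
      fix x assume x: "x \<in> {z \<in> carrier M. e z = \<zero>\<^bsub>M\<^esub>}"
      have "e (\<ominus>\<^bsub>M\<^esub> x) = \<zero>\<^bsub>M\<^esub>" using hom_minus[OF ag eh subset_refl zero_closed, of x] x e0 by (simp add: a_minus_def)
      thus "\<ominus>\<^bsub>M\<^esub> x \<in> {z \<in> carrier M. e z = \<zero>\<^bsub>M\<^esub>}" using x by auto
    next
      fix x r assume x: "x \<in> {z \<in> carrier M. e z = \<zero>\<^bsub>M\<^esub>}" and r: "r \<in> carrier R"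
      have "\<forall>x\<in>carrier M. \<forall>r\<in>carrier R. e (s x r) = s (e x) r" using eh unfolding mod_hom_def by blast
      moreover have "\<forall>x\<in>carrier M. \<forall>r\<in>carrier R. s x r \<in> carrier M" using rm_smc[OF rm] .
      ultimately show "s x r \<in> {z \<in> carrier M. e z = \<zero>\<^bsub>M\<^esub>}" using x r s_zero[OF rm r] by simp
    qed auto
    moreover have "\<zero>\<^bsub>M\<^esub> \<in> N" using sm_zero[OF sN] .
    moreover have "N \<inter> K = {\<zero>\<^bsub>M\<^esub>}" if "\<zero>\<^bsub>M\<^esub> \<in> N" using that eid e0 Nc unfolding K_def by auto
    moreover have "\<forall>z\<in>carrier M. \<exists>x\<in>N. \<exists>y\<in>K. z = x \<oplus>\<^bsub>M\<^esub> y"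
    proof
      fix z assume z: "z \<in> carrier M"
      have ez: "e z \<in> carrier M" using eN Nc z by auto
      have "e (z \<ominus>\<^bsub>M\<^esub> e z) = \<zero>\<^bsub>M\<^esub>" using hom_minus[OF ag eh subset_refl z ez] eid eN z ez by (simp add: a_minus_def r_neg)
      hence "z \<ominus>\<^bsub>M\<^esub> e z \<in> K" unfolding K_def using z ez by auto
      moreover have "z = e z \<oplus>\<^bsub>M\<^esub> (z \<ominus>\<^bsub>M\<^esub> e z)" using z ez add.m_lcomm[of "e z" z "\<ominus>\<^bsub>M\<^esub> e z"] by (simp add: a_minus_def r_neg)
      ultimately show "\<exists>x\<in>N. \<exists>y\<in>K. z = x \<oplus>\<^bsub>M\<^esub> y" using eN z by blast
    qed
    ultimately show ?thesis by blast
  qed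
qed

theorem proposition2p4:
  fixes R :: "('a, 'c) ring_scheme" and M :: "('b, 'd) ring_scheme" and s :: "'b \<Rightarrow> 'a \<Rightarrow> 'b"
  assumes "right_module R M s"
    and "self_similar R M s"
  shows "quasi_pseudo_principally_injective R M s \<longleftrightarrow> semisimple R M s"
  using ss_qppi qppi_ss assms by blast

end
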